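(* Let $p,q\in[1,\infty]$, let $\varphi_0,\varphi_1,\varphi$ be positive non-degenerate quasi-concave functions on $(0,\infty)$, let $\{\widetilde t_i\}$ be a discretizing sequence for $\varphi(\varphi_0,\varphi_1)$, $\{\tau_k\}$ a discretizing sequence for $\varphi_0$ and $\{z_k\}$ a discretizing sequence for $\varphi_1$. Let $M_k^0=\{i:\tau_k\le\widetilde t_i\le\tau_{k+1}\}$, $M_k^1=\{i:z_k\le\widetilde t_i\le z_{k+1}\}$, and for $t>0$ let $\Omega_t=\{y>0:\ \varphi_1(y)/\varphi_0(y)\le t\}$, $\Omega_t^c=\{y>0:\ \varphi_1(y)/\varphi_0(y)>t\}$. Write $A_0=l_p\big(l_q^{M_k^0}(1/\varphi_0(\widetilde t_i))\big)$ and $A_1=l_p\big(l_q^{M_k^1}(1/\varphi_1(\widetilde t_i))\big)$. Then, with constants independent of $a=\{a_i\}\in A_0+A_1$ and $t>0$, $$K(t,a;A_0,A_1)\approx\big\|\{a_i\chi_{\Omega_t}(\widetilde t_i)\}\big\|_{A_0}+t\,\big\|\{a_i\chi_{\Omega_t^c}(\widetilde t_i)\}\big\|_{A_1}.$$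
   Context: A function $\psi:(0,\infty)\to(0,\infty)$ is non-degenerate quasi-concave if it is non-decreasing, $\psi(t)/t$ is non-increasing, and $\lim_{t\to0+}\psi(t)=\lim_{t\to\infty}\psi(t)/t=\lim_{t\to0+}t/\psi(t)=\lim_{t\to\infty}1/\psi(t)=0$. $\varphi(\varphi_0,\varphi_1)(t)=\varphi_0(t)\varphi(\varphi_1(t)/\varphi_0(t))$. A positive sequence is strongly increasing if $\inf_k a_{k+1}/a_k\ge2$, strongly decreasing if $\sup_k a_{k+1}/a_k\le1/2$. A strongly increasing $\{s_k\}_{k\in\mathbb Z}$ is a discretizing sequence for $\psi$ if $\{\psi(s_k)\}$ is strongly increasing, $\{\psi(s_k)/s_k\}$ is strongly decreasing, and $\mathbb Z=\mathbb Z_1\sqcup\mathbb Z_2$ with $\psi(s_{k+1})\le2\psi(s_k)$ for $k\in\mathbb Z_1$ and $\psi(s_k)/s_k\le2\psi(s_{k+1})/s_{k+1}$ for $k\in\mathbb Z_2$. For a Banach couple $(A_0,A_1)$, $K(t,a;A_0,A_1)=\inf_{a=b+c,\,b\in A_0,c\in A_1}(\|b\|_{A_0}+t\|c\|_{A_1})$. For sets $M_k\subset\mathbb Z$ and positive weight $u$, $l_p(l_q^{M_k}(u))$ is the space of $\{a_i\}_{i\in\mathbb Z}$ with norm $\big(\sum_{k\in\mathbb Z}(\sum_{i\in M_k}|a_iu_i|^q)^{p/q}\big)^{1/p}$ (usual modification if $p$ or $q$ is $\infty$). $\chi_\Omega$ is the indicator function of $\Omega$; $X\approx Y$ means $c^{-1}Y\le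 X\le cY$ for a constant $c$. *)

theory Defs
  imports "HOL-Analysis.Analysis"
begin

definition nondeg_quasi_concave :: "(real \<Rightarrow> real) \<Rightarrow> bool" where
  "nondeg_quasi_concave \<psi> \<longleftrightarrow>
     (\<forall>t>0. \<psi> t > 0) \<and>
     mono_on {0<..} \<psi> \<and>
     antimono_on {0<..} (\<lambda>t. \<psi> t / t) \<and>
     (\<psi> \<longlongrightarrow> 0) (at_right 0) \<and>
     ((\<lambda>t. \<psi> t / t) \<longlongrightarrow> 0) at_top \<and>
     ((\<lambda>t. t / \<psi> t) \<longlongrightarrow> 0) (at_right 0) \<and>
     ((\<lambda>t. 1 / \<psi> t) \<longlongrightarrow> 0) at_top"

definition interp_fun :: "(real \<Rightarrow> real) \<Rightarrow> (real \<Rightarrow> real) \<Rightarrow> (real \<Rightarrow> real) \<Rightarrow> real \<Rightarrow> real" where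
  "interp_fun \<phi> \<phi>0 \<phi>1 t = \<phi>0 t * \<phi> (\<phi>1 t / \<phi>0 t)"

definition strongly_increasing :: "(int \<Rightarrow> real) \<Rightarrow> bool" where
  "strongly_increasing a \<longleftrightarrow> (\<forall>k. a k > 0) \<and> (\<forall>k. 2 * a k \<le> a (k+1))"

definition strongly_decreasing :: "(int \<Rightarrow> real) \<Rightarrow> bool" where
  "strongly_decreasing a \<longleftrightarrow> (\<forall>k. a k > 0) \<and> (\<forall>k. a (k+1) \<le> a k / 2)"

definition discretizing_seq :: "(int \<Rightarrow> real) \<Rightarrow> (real \<Rightarrow> real) \<Rightarrow> bool" where
  "discretizing_seq s \<psi> \<longleftrightarrow>
     strongly_increasing s \<and>
     strongly_increasing (\<lambda>k. \<psi> (s k)) \<and>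
     strongly_decreasing (\<lambda>k. \<psi> (s k) / s k) \<and>
     (\<exists>Z1 Z2. Z1 \<inter> Z2 = {} \<and> Z1 \<union> Z2 = UNIV \<and>
        (\<forall>k\<in>Z1. \<psi> (s (k+1)) \<le> 2 * \<psi> (s k)) \<and>
        (\<forall>k\<in>Z2. \<psi> (s k) / s k \<le> 2 * (\<psi> (s (k+1)) / s (k+1))))"

text \<open>Exponents p, q range over [1, infinity], encoded as extended reals.
  Norm of l_p(l_q^{M_k}(u)) for a finite truncation: outer indices in a finite set K,
  inner indices in a finite set G.\<close>
definition inner_trunc :: "ereal \<Rightarrow> (int \<Rightarrow> int set) \<Rightarrow> (int \<Rightarrow> real) \<Rightarrow> (int \<Rightarrow> real) \<Rightarrow> int set \<Rightarrow> int \<Rightarrow> real" where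
  "inner_trunc q M u a G k =
     (if q = \<infinity> then Max (insert 0 ((\<lambda>i. \<bar>a i * u i\<bar>) ` (G \<inter> M k)))
      else (\<Sum>i\<in>G \<inter> M k. \<bar>a i * u i\<bar> powr real_of_ereal q) powr (1 / real_of_ereal q))"

definition mixed_trunc :: "ereal \<Rightarrow> ereal \<Rightarrow> (int \<Rightarrow> int set) \<Rightarrow> (int \<Rightarrow> real) \<Rightarrow> (int \<Rightarrow> real) \<Rightarrow> int set \<Rightarrow> int set \<Rightarrow> real" where
  "mixed_trunc p q M u a K G =
     (if p = \<infinity> then Max (insert 0 (inner_trunc q M u a G ` K))
      else (\<Sum>k\<in>K. inner_trunc q M u a G k powr real_of_ereal p) powr (1 / real_of_ereal p))"

text \<open>The (extended) norm of a in l_p(l_q^{M_k}(u)); it is infinite iff a is not in the space.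
  It is the supremum over finite truncations, which equals the usual norm.\<close>
definition mixed_norm :: "ereal \<Rightarrow> ereal \<Rightarrow> (int \<Rightarrow> int set) \<Rightarrow> (int \<Rightarrow> real) \<Rightarrow> (int \<Rightarrow> real) \<Rightarrow> ennreal" where
  "mixed_norm p q M u a =
     (SUP KG \<in> {(K, G). finite K \<and> finite G}. ennreal (mixed_trunc p q M u a (fst KG) (snd KG)))"

definition in_space :: "((int \<Rightarrow> real) \<Rightarrow> ennreal) \<Rightarrow> (int \<Rightarrow> real) \<Rightarrow> bool" where
  "in_space N a \<longleftrightarrow> N a < \<infinity>"

definition K_functional :: "((int \<Rightarrow> real) \<Rightarrow> ennreal) \<Rightarrow> ((int \<Rightarrow> real) \<Rightarrow> ennreal) \<Rightarrow> real \<Rightarrow> (int \<Rightarrow> real) \<Rightarrow> ennreal" where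
  "K_functional N0 N1 t a =
     (INF bc \<in> {(b, c). a = (\<lambda>i. b i + c i) \<and> in_space N0 b \<and> in_space N1 c}.
        N0 (fst bc) + ennreal t * N1 (snd bc))"

definition in_sum_space :: "((int \<Rightarrow> real) \<Rightarrow> ennreal) \<Rightarrow> ((int \<Rightarrow> real) \<Rightarrow> ennreal) \<Rightarrow> (int \<Rightarrow> real) \<Rightarrow> bool" where
  "in_sum_space N0 N1 a \<longleftrightarrow> (\<exists>b c. a = (\<lambda>i. b i + c i) \<and> in_space N0 b \<and> in_space N1 c)"

end

theory Submission
  imports Defs
begin

lemma convex_powr0: assumes "(p::real) \<ge> 1" shows "convex_on {0..} (\<lambda>x::real. x powr p)"
proof (rule convex_onI)
  fix t x y :: real assume t: "0 < t" "t < 1" and x: "x \<in> {0..}" and y: "y \<in> {0..}"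
  show "((1 - t) *\<^sub>R x + t *\<^sub>R y) powr p \<le> (1 - t) * x powr p + t * y powr p"
  proof (cases "x > 0 \<and> y > 0")
    case True
    then show ?thesis using powr_convex[OF assms] t unfolding convex_on_def by auto
  next
    case False
    then have "x = 0 \<or> y = 0" using x y by auto
    moreover have "(t * y) powr p \<le> t * y powr p" using t y assms
    proof -
      have "(t*y) powr p = t powr p * y powr p" using t y by (simp add: powr_mult)
      also have "t powr p \<le> t powr 1" using t assms by (intro powr_mono') auto
      hence "t powr p * y powr p \<le> t * y powr p" using t by (simp add: mult_right_mono)
      finally show ?thesis .
    qed
    moreover have "((1-t) * x) powr p \<le> (1-t) * x powr p" using t x assms
    proof -
      have "((1-t)*x) powr p = (1-t) powr p * x powr p" using t x by (simp add: powr_mult)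
      also have "(1-t) powr p \<le> (1-t) powr 1" using t assms by (intro powr_mono') auto
      hence "(1-t) powr p * x powr p \<le> (1-t) * x powr p" using t by (simp add: mult_right_mono)
      finally show ?thesis .
    qed
    ultimately show ?thesis by auto
  qed
qed (rule convex_real_interval)

lemma jensen_w:
  fixes w y :: "'a \<Rightarrow> real"
  assumes "finite F" "pp \<ge> 1" "\<And>i. i\<in>F \<Longrightarrow> w i \<ge> 0" "\<And>i. i\<in>F \<Longrightarrow> y i \<ge> 0"
  shows "(\<Sum>i\<in>F. w i * y i) powr pp \<le> (\<Sum>i\<in>F. w i) powr (pp - 1) * (\<Sum>i\<in>F. w i * y i powr pp)"
proof (cases "(\<Sum>i\<in>F. w i) = 0")
  case True
  then have "\<forall>i\<in>F. w i = 0" using assms sum_nonneg_eq_0_iff by blast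
  then show ?thesis using assms by simp
next
  case False
  define W where "W = (\<Sum>i\<in>F. w i)"
  have Wp: "W > 0" using False assms W_def by (metis less_eq_real_def sum_nonneg)
  have Fne: "F \<noteq> {}" using False by auto
  have "(\<Sum>i\<in>F. (w i / W) *\<^sub>R y i) powr pp \<le> (\<Sum>i\<in>F. (w i / W) * y i powr pp)"
    by (rule convex_on_sum[OF assms(1) Fne convex_powr0[OF assms(2)]])
      (use assms Wp in \<open>auto simp: W_def sum_divide_distrib[symmetric]\<close>)
  hence "((\<Sum>i\<in>F. w i * y i) / W) powr pp \<le> (\<Sum>i\<in>F. w i * y i powr pp) / W"
    by (simp add: sum_divide_distrib[symmetric])
  moreover have "((\<Sum>i\<in>F. w i * y i) / W) powr pp = (\<Sum>i\<in>F. w i * y i) powr pp / W powr pp"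
    using Wp assms by (auto intro!: powr_divide sum_nonneg mult_nonneg_nonneg)
  ultimately have "(\<Sum>i\<in>F. w i * y i) powr pp \<le> W powr pp * ((\<Sum>i\<in>F. w i * y i powr pp) / W)"
    using Wp by (simp add: divide_le_eq mult.commute)
  also have "\<dots> = W powr (pp - 1) * (\<Sum>i\<in>F. w i * y i powr pp)"
    using Wp by (simp add: powr_diff)
  finally show ?thesis by (simp add: W_def)
qed

lemma lq_le_l1:
  fixes x :: "'a \<Rightarrow> real"
  assumes "finite F" "qq \<ge> 1" "\<And>i. i\<in>F \<Longrightarrow> x i \<ge> 0"
  shows "(\<Sum>i\<in>F. x i powr qq) powr (1/qq) \<le> (\<Sum>i\<in>F. x i)"
proof (cases "(\<Sum>i\<in>F. x i) = 0")
  case True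
  then have "\<forall>i\<in>F. x i = 0" using assms sum_nonneg_eq_0_iff by blast
  then show ?thesis using assms by simp
next
  case False
  define S where "S = (\<Sum>i\<in>F. x i)"
  have Sp: "S > 0" using False assms S_def by (metis less_eq_real_def sum_nonneg)
  have le: "x i \<le> S" if "i\<in>F" for i using that assms unfolding S_def by (intro member_le_sum) auto
  have "(\<Sum>i\<in>F. x i powr qq) \<le> (\<Sum>i\<in>F. x i * S powr (qq - 1))"
  proof (rule sum_mono)
    fix i assume i: "i\<in>F"
    show "x i powr qq \<le> x i * S powr (qq - 1)"
    proof (cases "x i = 0")
      case True then show ?thesis using assms by simp
    next
      case False
      then have xp: "x i > 0" using assms i by force
      have "x i powr qq = x i * x i powr (qq - 1)" using xp by (simp add: powr_diff)
      also have "\<dots> \<le> x i * S powr (qq - 1)" using xp le[OF i] assms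
        by (intro mult_left_mono powr_mono2) auto
      finally show ?thesis .
    qed
  qed
  also have "\<dots> = S * S powr (qq - 1)" by (simp add: sum_distrib_right[symmetric] S_def)
  also have "\<dots> = S powr qq" using Sp by (simp add: powr_diff)
  finally have "(\<Sum>i\<in>F. x i powr qq) powr (1/qq) \<le> (S powr qq) powr (1/qq)"
    using assms by (intro powr_mono2) (auto intro!: sum_nonneg)
  also have "\<dots> = S" using Sp assms by (simp add: powr_powr)
  finally show ?thesis by (simp add: S_def)
qed

lemma single_le_lq:
  fixes x :: "'a \<Rightarrow> real"
  assumes "finite F" "qq \<ge> 1" "\<And>i. i\<in>F \<Longrightarrow> x i \<ge> 0" "j \<in> F"
  shows "x j \<le> (\<Sum>i\<in>F. x i powr qq) powr (1/qq)"
proof -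
  have "x j powr qq \<le> (\<Sum>i\<in>F. x i powr qq)" using assms by (intro member_le_sum) auto
  hence "(x j powr qq) powr (1/qq) \<le> (\<Sum>i\<in>F. x i powr qq) powr (1/qq)"
    using assms by (intro powr_mono2) auto
  thus ?thesis using assms by (simp add: powr_powr)
qed

lemma quasi_tri:
  fixes x y :: "'a \<Rightarrow> real"
  assumes "finite F" "s \<ge> 1" "\<And>i. i\<in>F \<Longrightarrow> x i \<ge> 0" "\<And>i. i\<in>F \<Longrightarrow> y i \<ge> 0"
  shows "(\<Sum>i\<in>F. (x i + y i) powr s) powr (1/s) \<le> 4 * ((\<Sum>i\<in>F. x i powr s) powr (1/s) + (\<Sum>i\<in>F. y i powr s) powr (1/s))"
proof -
  define X where "X = (\<Sum>i\<in>F. x i powr s)"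
  define Y where "Y = (\<Sum>i\<in>F. y i powr s)"
  have X0: "X \<ge> 0" and Y0: "Y \<ge> 0" by (auto simp: X_def Y_def intro!: sum_nonneg)
  have pt: "(x i + y i) powr s \<le> 2 powr s * (x i powr s + y i powr s)" if "i \<in> F" for i
  proof -
    have "(x i + y i) powr s \<le> (2 * max (x i) (y i)) powr s"
      using assms that by (intro powr_mono2) auto
    also have "\<dots> = 2 powr s * max (x i) (y i) powr s" using assms that by (simp add: powr_mult)
    also have "max (x i) (y i) powr s \<le> x i powr s + y i powr s" by (auto simp: max_def)
    finally show ?thesis by simp
  qed
  have "(\<Sum>i\<in>F. (x i + y i) powr s) \<le> (\<Sum>i\<in>F. 2 powr s * (x i powr s + y i powr s))"
    by (intro sum_mono pt)
  also have "\<dots> = 2 powr s * (X + Y)" by (simp add: sum_distrib_left[symmetric] sum.distrib X_def Y_def)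
  finally have "(\<Sum>i\<in>F. (x i + y i) powr s) \<le> 2 powr s * (X + Y)" .
  hence "(\<Sum>i\<in>F. (x i + y i) powr s) powr (1/s) \<le> (2 powr s * (X + Y)) powr (1/s)"
    using assms by (intro powr_mono2) (auto intro!: sum_nonneg)
  also have "\<dots> = 2 * (X + Y) powr (1/s)" using assms X0 Y0 by (simp add: powr_mult powr_powr)
  also have "(X + Y) powr (1/s) \<le> (2 * max X Y) powr (1/s)" using assms X0 Y0 by (intro powr_mono2) auto
  also have "\<dots> = 2 powr (1/s) * max X Y powr (1/s)" using X0 Y0 by (simp add: powr_mult)
  also have "2 powr (1/s) \<le> 2 powr 1" using assms by (intro powr_mono) auto
  hence "2 powr (1/s) * max X Y powr (1/s) \<le> 2 * max X Y powr (1/s)" by (simp add: mult_right_mono)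
  also have "max X Y powr (1/s) \<le> X powr (1/s) + Y powr (1/s)" by (auto simp: max_def)
  finally show ?thesis by (simp add: X_def Y_def)
qed

definition lqn :: "ereal \<Rightarrow> 'a set \<Rightarrow> ('a \<Rightarrow> real) \<Rightarrow> real" where
  "lqn q F x = (if q = \<infinity> then Max (insert 0 (x ` F))
      else (\<Sum>i\<in>F. x i powr real_of_ereal q) powr (1 / real_of_ereal q))"

lemma inner_lqn: "inner_trunc q M u a G k = lqn q (G \<inter> M k) (\<lambda>i. \<bar>a i * u i\<bar>)"
  unfolding inner_trunc_def lqn_def by simp

lemma mixed_lqn: "mixed_trunc p q M u a K G = lqn p K (inner_trunc q M u a G)"
  unfolding mixed_trunc_def lqn_def by simp

lemma ereal_ge1: assumes "1 \<le> q" "q \<noteq> \<infinity>" shows "real_of_ereal q \<ge> 1"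
  using assms by (cases q) auto

lemma lqn_nonneg: assumes "finite F" shows "0 \<le> lqn q F x"
  unfolding lqn_def using assms by auto

lemma lqn_cong: assumes "\<And>i. i \<in> F \<Longrightarrow> x i = y i" shows "lqn q F x = lqn q F y"
  unfolding lqn_def using assms by (auto cong: image_cong sum.cong)

lemma lqn_mono:
  assumes "finite F" "1 \<le> q" "\<And>i. i\<in>F \<Longrightarrow> 0 \<le> x i" "\<And>i. i\<in>F \<Longrightarrow> x i \<le> y i"
  shows "lqn q F x \<le> lqn q F y"
proof (cases "q = \<infinity>")
  case True
  have "Max (insert 0 (x ` F)) \<le> Max (insert 0 (y ` F))"
  proof (rule Max.boundedI)
    fix v assume "v \<in> insert 0 (x ` F)"
    then show "v \<le> Max (insert 0 (y ` F))"
    proof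
      assume "v = 0" then show ?thesis using assms by (simp add: Max_ge_iff)
    next
      assume "v \<in> x ` F"
      then obtain i where "i \<in> F" "v = x i" by auto
      then show ?thesis using assms(1) assms(4)[of i] by (simp add: Max_ge_iff) (meson order_trans)
    qed
  qed (use assms in auto)
  then show ?thesis using True unfolding lqn_def by simp
next
  case False
  have q1: "real_of_ereal q \<ge> 1" using ereal_ge1 assms False by auto
  have "(\<Sum>i\<in>F. x i powr real_of_ereal q) \<le> (\<Sum>i\<in>F. y i powr real_of_ereal q)"
    using assms q1 by (intro sum_mono powr_mono2) auto
  then show ?thesis using False q1 unfolding lqn_def
    by (auto intro!: powr_mono2 sum_nonneg)
qed

lemma lqn_single:
  assumes "finite F" "1 \<le> q" "\<And>i. i\<in>F \<Longrightarrow> 0 \<le> x i" "j \<in> F"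
  shows "x j \<le> lqn q F x"
proof (cases "q = \<infinity>")
  case True then show ?thesis using assms unfolding lqn_def by auto
next
  case False
  have q1: "real_of_ereal q \<ge> 1" using ereal_ge1 assms False by auto
  show ?thesis using False single_le_lq[OF assms(1) q1, of x j] assms unfolding lqn_def by auto
qed

lemma lqn_le_l1:
  assumes "finite F" "1 \<le> q" "\<And>i. i\<in>F \<Longrightarrow> 0 \<le> x i"
  shows "lqn q F x \<le> (\<Sum>i\<in>F. x i)"
proof (cases "q = \<infinity>")
  case True then show ?thesis using assms unfolding lqn_def
    by (auto intro!: Max.boundedI sum_nonneg member_le_sum)
next
  case False
  have q1: "real_of_ereal q \<ge> 1" using ereal_ge1 assms False by auto
  show ?thesis using False lq_le_l1[OF assms(1) q1, of x] assms unfolding lqn_def by auto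
qed

lemma lqn_scale:
  assumes "finite F" "1 \<le> q" "\<And>i. i\<in>F \<Longrightarrow> 0 \<le> x i" "0 \<le> c"
  shows "lqn q F (\<lambda>i. c * x i) = c * lqn q F x"
proof (cases "q = \<infinity>")
  case True
  have "Max (insert 0 ((\<lambda>i. c * x i) ` F)) = c * Max (insert 0 (x ` F))"
  proof (cases "F = {}")
    case False
    have "(\<lambda>i. c * x i) ` F = (\<lambda>y. c * y) ` (x ` F)" by auto
    hence "insert 0 ((\<lambda>i. c * x i) ` F) = (\<lambda>y. c * y) ` (insert 0 (x ` F))" by auto
    moreover have "Max ((\<lambda>y. c * y) ` (insert 0 (x ` F))) = c * Max (insert 0 (x ` F))"
      using assms by (intro mono_Max_commute[symmetric]) (auto intro: monoI mult_left_mono)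
    ultimately show ?thesis by simp
  qed simp
  then show ?thesis using True unfolding lqn_def by simp
next
  case False
  have q1: "real_of_ereal q \<ge> 1" using ereal_ge1 assms False by auto
  have "(\<Sum>i\<in>F. (c * x i) powr real_of_ereal q) = c powr real_of_ereal q * (\<Sum>i\<in>F. x i powr real_of_ereal q)"
    using assms by (simp add: powr_mult sum_distrib_left)
  hence "(\<Sum>i\<in>F. (c * x i) powr real_of_ereal q) powr (1 / real_of_ereal q)
      = (c powr real_of_ereal q) powr (1 / real_of_ereal q) * (\<Sum>i\<in>F. x i powr real_of_ereal q) powr (1 / real_of_ereal q)"
    using assms by (simp add: powr_mult sum_nonneg)
  also have "(c powr real_of_ereal q) powr (1 / real_of_ereal q) = c" using q1 assms by (simp add: powr_powr)
  finally show ?thesis using False unfolding lqn_def by simp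
qed

lemma lqn_quasi:
  assumes "finite F" "1 \<le> q" "\<And>i. i\<in>F \<Longrightarrow> 0 \<le> x i" "\<And>i. i\<in>F \<Longrightarrow> 0 \<le> y i"
  shows "lqn q F (\<lambda>i. x i + y i) \<le> 4 * (lqn q F x + lqn q F y)"
proof (cases "q = \<infinity>")
  case True
  have "Max (insert 0 ((\<lambda>i. x i + y i) ` F)) \<le> Max (insert 0 (x ` F)) + Max (insert 0 (y ` F))"
    using assms by (auto intro!: Max.boundedI add_mono add_nonneg_nonneg)
  hence "lqn q F (\<lambda>i. x i + y i) \<le> lqn q F x + lqn q F y" using True by (simp add: lqn_def)
  moreover have "0 \<le> lqn q F x + lqn q F y" using assms by (auto intro!: add_nonneg_nonneg lqn_nonneg)
  ultimately show ?thesis by (smt (verit))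
next
  case False
  have q1: "real_of_ereal q \<ge> 1" using ereal_ge1 assms False by auto
  show ?thesis using False quasi_tri[OF assms(1) q1, of x y] assms unfolding lqn_def by auto
qed

lemma inner_nonneg: "finite G \<Longrightarrow> 0 \<le> inner_trunc q M u a G k"
  unfolding inner_lqn by (rule lqn_nonneg) auto

lemma mixed_nonneg: "finite K \<Longrightarrow> 0 \<le> mixed_trunc p q M u a K G"
  unfolding mixed_lqn by (rule lqn_nonneg)

lemma mixed_mono:
  assumes "1 \<le> p" "1 \<le> q" "finite K" "finite G" "\<And>i. \<bar>f i * u i\<bar> \<le> \<bar>g i * u i\<bar>"
  shows "mixed_trunc p q M u f K G \<le> mixed_trunc p q M u g K G"
  unfolding mixed_lqn using assms
  by (intro lqn_mono) (auto simp: inner_lqn intro!: lqn_mono lqn_nonneg)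

lemma mixed_quasi:
  assumes "1 \<le> p" "1 \<le> q" "finite K" "finite G"
  shows "mixed_trunc p q M u (\<lambda>i. f i + g i) K G \<le> 16 * (mixed_trunc p q M u f K G + mixed_trunc p q M u g K G)"
proof -
  have inn: "inner_trunc q M u (\<lambda>i. f i + g i) G k \<le> 4 * (inner_trunc q M u f G k + inner_trunc q M u g G k)" for k
  proof -
    have "inner_trunc q M u (\<lambda>i. f i + g i) G k \<le> lqn q (G \<inter> M k) (\<lambda>i. \<bar>f i * u i\<bar> + \<bar>g i * u i\<bar>)"
      unfolding inner_lqn using assms by (intro lqn_mono) (auto simp: distrib_right abs_triangle_ineq)
    also have "\<dots> \<le> 4 * (inner_trunc q M u f G k + inner_trunc q M u g G k)"
      unfolding inner_lqn using assms by (intro lqn_quasi) auto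
    finally show ?thesis .
  qed
  have "mixed_trunc p q M u (\<lambda>i. f i + g i) K G \<le> lqn p K (\<lambda>k. 4 * (inner_trunc q M u f G k + inner_trunc q M u g G k))"
    unfolding mixed_lqn using assms inn by (intro lqn_mono) (auto intro!: inner_nonneg)
  also have "\<dots> = 4 * lqn p K (\<lambda>k. inner_trunc q M u f G k + inner_trunc q M u g G k)"
    using assms by (intro lqn_scale) (auto intro!: inner_nonneg add_nonneg_nonneg)
  also have "lqn p K (\<lambda>k. inner_trunc q M u f G k + inner_trunc q M u g G k) \<le> 4 * (mixed_trunc p q M u f K G + mixed_trunc p q M u g K G)"
    unfolding mixed_lqn using assms by (intro lqn_quasi) (auto intro!: inner_nonneg)
  finally show ?thesis by simp
qed

lemma geo_half_sum:
  fixes F :: "int set" assumes "finite F"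
  shows "(\<Sum>i\<in>{i\<in>F. m \<le> i}. (3/4::real) ^ nat \<bar>i - m\<bar>) \<le> 4"
proof -
  let ?F = "{i\<in>F. m \<le> i}"
  have inj: "inj_on (\<lambda>i. nat \<bar>i - m\<bar>) ?F" by (auto simp: inj_on_def)
  have "(\<Sum>i\<in>?F. (3/4::real) ^ nat \<bar>i - m\<bar>) = (\<Sum>n\<in>(\<lambda>i. nat \<bar>i - m\<bar>) ` ?F. (3/4::real) ^ n)"
    by (simp only: sum.reindex[OF inj] o_def)
  also have "\<dots> \<le> (\<Sum>n. (3/4::real) ^ n)"
    using assms by (intro sum_le_suminf) auto
  also have "\<dots> = 4" using suminf_geometric[of "3/4::real"] by simp
  finally show ?thesis .
qed

lemma geo_sum:
  fixes F :: "int set" assumes "finite F"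
  shows "(\<Sum>i\<in>F. (3/4::real) ^ nat \<bar>i - m\<bar>) \<le> 8"
proof -
  have F: "F = {i\<in>F. m \<le> i} \<union> {i\<in>F. i < m}" by auto
  have "(\<Sum>i\<in>F. (3/4::real) ^ nat \<bar>i - m\<bar>) = (\<Sum>i\<in>{i\<in>F. m \<le> i}. (3/4::real) ^ nat \<bar>i - m\<bar>) + (\<Sum>i\<in>{i\<in>F. i < m}. (3/4::real) ^ nat \<bar>i - m\<bar>)"
  proof -
    have "(\<Sum>i\<in>F. (3/4::real) ^ nat \<bar>i - m\<bar>) = (\<Sum>i\<in>{i\<in>F. m \<le> i} \<union> {i\<in>F. i < m}. (3/4::real) ^ nat \<bar>i - m\<bar>)"
      by (rule sum.cong) auto
    also have "\<dots> = (\<Sum>i\<in>{i\<in>F. m \<le> i}. (3/4::real) ^ nat \<bar>i - m\<bar>) + (\<Sum>i\<in>{i\<in>F. i < m}. (3/4::real) ^ nat \<bar>i - m\<bar>)"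
      using assms by (intro sum.union_disjoint) auto
    finally show ?thesis .
  qed
  also have "(\<Sum>i\<in>{i\<in>F. i < m}. (3/4::real) ^ nat \<bar>i - m\<bar>) \<le> (\<Sum>i\<in>{i\<in>F. m \<le> -i + 2*m}. (3/4::real) ^ nat \<bar>i - m\<bar>)"
    using assms by (intro sum_mono2) auto
  also have "(\<Sum>i\<in>{i\<in>F. m \<le> -i + 2*m}. (3/4::real) ^ nat \<bar>i - m\<bar>) = (\<Sum>i\<in>{i\<in>(\<lambda>i. -i + 2*m) ` F. m \<le> i}. (3/4::real) ^ nat \<bar>i - m\<bar>)"
  proof -
    have "{i\<in>(\<lambda>i. -i + 2*m) ` F. m \<le> i} = (\<lambda>i. -i + 2*m) ` {i\<in>F. m \<le> -i + 2*m}" by auto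
    moreover have "inj_on (\<lambda>i. -i + 2*m) {i\<in>F. m \<le> -i + 2*m}" by (auto simp: inj_on_def)
    ultimately show ?thesis by (simp add: sum.reindex abs_minus_commute)
  qed
  also have "(\<Sum>i\<in>{i\<in>F. m \<le> i}. (3/4::real) ^ nat \<bar>i - m\<bar>) \<le> 4" by (rule geo_half_sum[OF assms])
  also have "(\<Sum>i\<in>{i\<in>(\<lambda>i. -i + 2*m) ` F. m \<le> i}. (3/4::real) ^ nat \<bar>i - m\<bar>) \<le> 4"
    by (rule geo_half_sum) (use assms in auto)
  finally show ?thesis by simp
qed

lemma sq_geo: "(4::real) * (9/16) ^ n = (2 * (3/4) ^ n) ^ 2"
proof -
  have "(2 * (3/4::real) ^ n) ^ 2 = 4 * ((3/4) ^ n) ^ 2" by (simp add: power_mult_distrib)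
  also have "((3/4::real) ^ n) ^ 2 = ((3/4) ^ 2) ^ n" by (simp add: power_mult[symmetric] mult.commute)
  finally show ?thesis by (simp add: power2_eq_square)
qed

lemma block_sum:
  fixes F :: "int set" and \<rho> :: "int \<Rightarrow> real"
  assumes "finite F" "\<And>i. 0 \<le> \<rho> i" "\<And>i. \<rho> i \<le> 1"
    and P: "\<And>i i'. i \<in> F \<Longrightarrow> i' \<in> F \<Longrightarrow> \<rho> i * \<rho> i' \<le> 2 * (1/2) ^ nat \<bar>i - i'\<bar>"
  shows "(\<Sum>i\<in>F. \<rho> i) \<le> 16"
proof (cases "F = {}")
  case True then show ?thesis by simp
next
  case False
  define m where "m = (SOME m. m \<in> F \<and> \<rho> m = Max (\<rho> ` F))"
  have "Max (\<rho> ` F) \<in> \<rho> ` F" using assms(1) False by (intro Max_in) auto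
  then obtain m0 where "m0 \<in> F \<and> \<rho> m0 = Max (\<rho> ` F)" by auto
  hence mm: "m \<in> F \<and> \<rho> m = Max (\<rho> ` F)" unfolding m_def by (rule someI)
  have m2: "\<rho> i \<le> \<rho> m" if "i \<in> F" for i
    using mm assms(1) that by (metis Max_ge finite_imageI image_eqI)
  have b: "\<rho> i \<le> 2 * (3/4) ^ nat \<bar>i - m\<bar>" if "i \<in> F" for i
  proof -
    let ?n = "nat \<bar>i - m\<bar>"
    have "\<rho> i ^ 2 = \<rho> i * \<rho> i" by (simp add: power2_eq_square)
    also have "\<dots> \<le> \<rho> i * \<rho> m" by (rule mult_left_mono[OF m2[OF that] assms(2)])
    also have "\<dots> \<le> 2 * (1/2) ^ ?n" using P[OF that] mm by blast
    also have "\<dots> \<le> (2 * (3/4) ^ ?n) ^ 2"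
    proof -
      have "(1/2::real) ^ ?n \<le> (9/16) ^ ?n" by (rule power_mono) auto
      moreover have "0 \<le> (9/16::real) ^ ?n" by simp
      ultimately have "2 * (1/2::real) ^ ?n \<le> 4 * (9/16) ^ ?n" by (smt (verit))
      also have "\<dots> = (2 * (3/4) ^ ?n) ^ 2" by (rule sq_geo)
      finally show ?thesis .
    qed
    finally have "\<rho> i ^ 2 \<le> (2 * (3/4) ^ ?n) ^ 2" .
    then show ?thesis by (rule power2_le_imp_le) simp
  qed
  have "(\<Sum>i\<in>F. \<rho> i) \<le> (\<Sum>i\<in>F. 2 * (3/4) ^ nat \<bar>i - m\<bar>)" by (intro sum_mono b)
  also have "\<dots> = 2 * (\<Sum>i\<in>F. (3/4) ^ nat \<bar>i - m\<bar>)" by (simp add: sum_distrib_left)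
  also have "\<dots> \<le> 16" using geo_sum[OF assms(1), of m] by simp
  finally show ?thesis .
qed

lemma dbl_count:
  fixes MS :: "int \<Rightarrow> int set" and f :: "int \<Rightarrow> real"
  assumes "finite K" "finite G" "\<And>i k k'. i \<in> MS k \<Longrightarrow> i \<in> MS k' \<Longrightarrow> k \<le> k' + 1"
    "\<And>i. i \<in> G \<Longrightarrow> 0 \<le> f i"
  shows "(\<Sum>k\<in>K. \<Sum>i\<in>G \<inter> MS k. f i) \<le> 2 * (\<Sum>i\<in>G. f i)"
proof -
  have "(\<Sum>k\<in>K. \<Sum>i\<in>G \<inter> MS k. f i) = (\<Sum>k\<in>K. \<Sum>i\<in>{i\<in>G. i \<in> MS k}. f i)"
    by (intro sum.cong) auto
  also have "\<dots> = (\<Sum>i\<in>G. \<Sum>k\<in>{k\<in>K. i \<in> MS k}. f i)"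
    using assms(1,2) by (rule sum.swap_restrict)
  also have "\<dots> = (\<Sum>i\<in>G. real (card {k\<in>K. i \<in> MS k}) * f i)" by simp
  also have "\<dots> \<le> (\<Sum>i\<in>G. 2 * f i)"
  proof (intro sum_mono mult_right_mono)
    fix i assume "i \<in> G"
    let ?S = "{k\<in>K. i \<in> MS k}"
    have "card ?S \<le> 2"
    proof (cases "?S = {}")
      case False
      have fin: "finite ?S" using assms by auto
      define m where "m = Min ?S"
      have "?S \<subseteq> {m, m+1}"
      proof
        fix k assume k: "k \<in> ?S"
        have "m \<in> ?S" using Min_in[OF fin False] m_def by simp
        have "m \<le> k" using Min_le[OF fin k] m_def by simp
        moreover have "k \<le> m + 1" using assms(3) k \<open>m \<in> ?S\<close> by auto
        ultimately show "k \<in> {m, m+1}" by auto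
      qed
      hence "card ?S \<le> card {m, m+1}" by (intro card_mono) auto
      also have "\<dots> \<le> 2" by (simp add: card_insert_if)
      finally show ?thesis .
    next
      case True show ?thesis unfolding True by simp
    qed
    then show "real (card ?S) \<le> 2" by simp
  qed (use assms in auto)
  also have "\<dots> = 2 * (\<Sum>i\<in>G. f i)" by (simp add: sum_distrib_left)
  finally show ?thesis .
qed

lemma transfer_trunc:
  fixes MS MT :: "int \<Rightarrow> int set" and us ut \<rho> a :: "int \<Rightarrow> real" and j :: "int \<Rightarrow> int"
  assumes p1: "1 \<le> p" and q1: "1 \<le> q" and L: "0 \<le> L" and fK: "finite K" and fG: "finite G"
   and r0: "\<And>i. 0 \<le> \<rho> i" and r1: "\<And>i. \<rho> i \<le> 1"
   and two: "\<And>i k k'. i \<in> MS k \<Longrightarrow> i \<in> MS k' \<Longrightarrow> k \<le> k' + 1"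
   and PS: "\<And>k i i'. i \<in> MS k \<Longrightarrow> i' \<in> MS k \<Longrightarrow> \<rho> i * \<rho> i' \<le> 2 * (1/2) ^ nat \<bar>i - i'\<bar>"
   and PT: "\<And>k i i'. i \<in> MT k \<Longrightarrow> i' \<in> MT k \<Longrightarrow> \<rho> i * \<rho> i' \<le> 2 * (1/2) ^ nat \<bar>i - i'\<bar>"
   and jm: "\<And>i. i \<in> MT (j i)"
   and rel: "\<And>i. \<bar>a i * us i\<bar> \<le> L * \<rho> i * \<bar>a i * ut i\<bar>"
  shows "mixed_trunc p q MS us a K G \<le> 32 * L * mixed_trunc p q MT ut a (j ` G) G"
proof -
  define Y where "Y = inner_trunc q MT ut a G"
  have Y0: "0 \<le> Y j'" for j' unfolding Y_def using fG by (rule inner_nonneg)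
  have xY: "\<bar>a i * ut i\<bar> \<le> Y (j i)" if "i \<in> G" for i
    unfolding Y_def inner_lqn using fG q1 that jm[of i] by (intro lqn_single) auto
  define W where "W k = (\<Sum>i\<in>G\<inter>MS k. \<rho> i * Y (j i))" for k
  have W0: "0 \<le> W k" for k unfolding W_def using r0 Y0 by (intro sum_nonneg) auto
  have inS: "inner_trunc q MS us a G k \<le> L * W k" for k
  proof -
    have "inner_trunc q MS us a G k \<le> (\<Sum>i\<in>G\<inter>MS k. \<bar>a i * us i\<bar>)"
      unfolding inner_lqn using fG q1 by (intro lqn_le_l1) auto
    also have "\<dots> \<le> (\<Sum>i\<in>G\<inter>MS k. L * (\<rho> i * Y (j i)))"
    proof (rule sum_mono)
      fix i assume i: "i \<in> G \<inter> MS k"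
      have "L * \<rho> i * \<bar>a i * ut i\<bar> \<le> L * \<rho> i * Y (j i)"
        using xY[of i] i L r0[of i] by (intro mult_left_mono) auto
      then show "\<bar>a i * us i\<bar> \<le> L * (\<rho> i * Y (j i))" using rel[of i] by (simp add: mult.assoc)
    qed
    also have "\<dots> = L * W k" by (simp add: W_def sum_distrib_left)
    finally show ?thesis .
  qed
  have sS: "(\<Sum>i\<in>G\<inter>MS k. \<rho> i) \<le> 16" for k
    using fG r0 r1 PS by (intro block_sum) auto
  have sT: "(\<Sum>i\<in>{i\<in>G. j i = j'}. \<rho> i) \<le> 16" for j'
  proof (rule block_sum)
    fix i i' assume "i \<in> {i\<in>G. j i = j'}" "i' \<in> {i\<in>G. j i = j'}"
    then show "\<rho> i * \<rho> i' \<le> 2 * (1/2) ^ nat \<bar>i - i'\<bar>" using PT[of i j' i'] jm[of i] jm[of i'] by auto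
  qed (use fG r0 r1 in auto)
  have mT: "mixed_trunc p q MT ut a (j ` G) G = lqn p (j ` G) Y" unfolding mixed_lqn Y_def ..
  have mS: "mixed_trunc p q MS us a K G = lqn p K (inner_trunc q MS us a G)" unfolding mixed_lqn ..
  show ?thesis
  proof (cases "p = \<infinity>")
    case True
    define Ym where "Ym = lqn p (j ` G) Y"
    have Ym0: "0 \<le> Ym" unfolding Ym_def using fG by (intro lqn_nonneg) auto
    have YY: "Y (j i) \<le> Ym" if "i \<in> G" for i
      unfolding Ym_def using fG p1 Y0 that by (intro lqn_single) auto
    have Wk: "W k \<le> 16 * Ym" for k
    proof -
      have "W k \<le> (\<Sum>i\<in>G\<inter>MS k. \<rho> i * Ym)" unfolding W_def
        using YY r0 by (intro sum_mono mult_left_mono) auto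
      also have "\<dots> = (\<Sum>i\<in>G\<inter>MS k. \<rho> i) * Ym" by (simp add: sum_distrib_right)
      also have "\<dots> \<le> 16 * Ym" using sS[of k] Ym0 by (intro mult_right_mono) auto
      finally show ?thesis .
    qed
    have "Max (insert 0 (inner_trunc q MS us a G ` K)) \<le> 32 * L * Ym"
    proof (rule Max.boundedI)
      fix v assume "v \<in> insert 0 (inner_trunc q MS us a G ` K)"
      then show "v \<le> 32 * L * Ym"
      proof
        assume "v = 0" then show ?thesis using L Ym0 by simp
      next
        assume "v \<in> inner_trunc q MS us a G ` K"
        then obtain k where "v = inner_trunc q MS us a G k" by auto
        then have "v \<le> L * W k" using inS by simp
        also have "\<dots> \<le> L * (16 * Ym)" using Wk L by (intro mult_left_mono) auto
        also have "\<dots> \<le> 32 * L * Ym" using L Ym0 by (simp add: mult_nonneg_nonneg)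
        finally show ?thesis .
      qed
    qed (use fK in auto)
    then show ?thesis using True unfolding mS mT by (simp add: Ym_def lqn_def)
  next
    case False
    define pp where "pp = real_of_ereal p"
    have pp1: "pp \<ge> 1" unfolding pp_def using ereal_ge1 p1 False by auto
    define T where "T = (\<Sum>j'\<in>j ` G. Y j' powr pp)"
    have T0: "0 \<le> T" unfolding T_def by (intro sum_nonneg) auto
    have c1: "lqn p K (inner_trunc q MS us a G) \<le> lqn p K (\<lambda>k. L * W k)"
      using fK p1 by (intro lqn_mono inS) (auto intro: inner_nonneg fG)
    have c2: "lqn p K (\<lambda>k. L * W k) = L * lqn p K W" using fK p1 W0 L by (intro lqn_scale) auto
    have c3: "lqn p K W = (\<Sum>k\<in>K. W k powr pp) powr (1/pp)" unfolding lqn_def pp_def using False by simp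
    have "(\<Sum>k\<in>K. W k powr pp) \<le> 2 * 16 powr pp * T"
    proof -
      have Wp: "W k powr pp \<le> 16 powr (pp - 1) * (\<Sum>i\<in>G\<inter>MS k. \<rho> i * Y (j i) powr pp)" for k
      proof -
        have "W k powr pp \<le> (\<Sum>i\<in>G\<inter>MS k. \<rho> i) powr (pp - 1) * (\<Sum>i\<in>G\<inter>MS k. \<rho> i * Y (j i) powr pp)"
          unfolding W_def using fG pp1 r0 Y0 by (intro jensen_w) auto
        also have "\<dots> \<le> 16 powr (pp - 1) * (\<Sum>i\<in>G\<inter>MS k. \<rho> i * Y (j i) powr pp)"
          using sS[of k] pp1 r0 by (intro mult_right_mono powr_mono2 sum_nonneg mult_nonneg_nonneg) auto
        finally show ?thesis .
      qed
      have "(\<Sum>k\<in>K. W k powr pp) \<le> (\<Sum>k\<in>K. 16 powr (pp - 1) * (\<Sum>i\<in>G\<inter>MS k. \<rho> i * Y (j i) powr pp))"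
        by (intro sum_mono Wp)
      also have "\<dots> = 16 powr (pp - 1) * (\<Sum>k\<in>K. \<Sum>i\<in>G\<inter>MS k. \<rho> i * Y (j i) powr pp)"
        by (simp add: sum_distrib_left)
      also have "(\<Sum>k\<in>K. \<Sum>i\<in>G\<inter>MS k. \<rho> i * Y (j i) powr pp) \<le> 2 * (\<Sum>i\<in>G. \<rho> i * Y (j i) powr pp)"
        using fK fG two r0 by (intro dbl_count) auto
      also have "(\<Sum>i\<in>G. \<rho> i * Y (j i) powr pp) = (\<Sum>j'\<in>j ` G. \<Sum>i\<in>{i\<in>G. j i = j'}. \<rho> i * Y (j i) powr pp)"
        using fG by (rule sum.image_gen)
      also have "\<dots> = (\<Sum>j'\<in>j ` G. (\<Sum>i\<in>{i\<in>G. j i = j'}. \<rho> i) * Y j' powr pp)"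
        by (intro sum.cong refl) (auto simp: sum_distrib_right)
      also have "\<dots> \<le> (\<Sum>j'\<in>j ` G. 16 * Y j' powr pp)"
        using sT by (intro sum_mono mult_right_mono) auto
      also have "\<dots> = 16 * T" by (simp add: T_def sum_distrib_left)
      finally have "(\<Sum>k\<in>K. W k powr pp) \<le> 16 powr (pp - 1) * (2 * (16 * T))"
        by (simp add: mult_left_mono)
      also have "16 powr (pp - 1) * (2 * (16 * T)) = 2 * (16 powr (pp - 1) * 16) * T" by simp
      also have "16 powr (pp - 1) * 16 = (16::real) powr pp" by (simp add: powr_diff)
      finally show ?thesis .
    qed
    hence "(\<Sum>k\<in>K. W k powr pp) powr (1/pp) \<le> (2 * 16 powr pp * T) powr (1/pp)"
      using pp1 by (intro powr_mono2) (auto intro!: sum_nonneg)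
    also have "\<dots> = 2 powr (1/pp) * 16 * T powr (1/pp)"
      using pp1 T0 by (simp add: powr_mult powr_powr)
    also have "\<dots> \<le> 32 * T powr (1/pp)"
    proof -
      have "2 powr (1/pp) \<le> 2 powr 1" using pp1 by (intro powr_mono) auto
      then show ?thesis by (simp add: mult_right_mono)
    qed
    finally have "lqn p K W \<le> 32 * T powr (1/pp)" unfolding c3 .
    hence "L * lqn p K W \<le> L * (32 * T powr (1/pp))" using L by (intro mult_left_mono) auto
    moreover have "lqn p (j ` G) Y = T powr (1/pp)" unfolding lqn_def pp_def T_def using False by simp
    ultimately show ?thesis unfolding mS mT using c1 c2
      by (simp add: mult.assoc mult.left_commute)
  qed
qed

lemma norm_SUP_le:
  assumes "\<And>K G. finite K \<Longrightarrow> finite G \<Longrightarrow> ennreal (mixed_trunc p q M u a K G) \<le> B"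
  shows "mixed_norm p q M u a \<le> B"
  unfolding mixed_norm_def using assms by (auto intro!: SUP_least)

lemma trunc_le_norm:
  assumes "finite K" "finite G"
  shows "ennreal (mixed_trunc p q M u a K G) \<le> mixed_norm p q M u a"
  unfolding mixed_norm_def using assms by (intro SUP_upper2[where i="(K,G)"]) auto

lemma norm_transfer:
  fixes MS MT :: "int \<Rightarrow> int set" and us ut \<rho> a :: "int \<Rightarrow> real"
  assumes p1: "1 \<le> p" and q1: "1 \<le> q" and L: "0 \<le> L"
   and r0: "\<And>i. 0 \<le> \<rho> i" and r1: "\<And>i. \<rho> i \<le> 1"
   and two: "\<And>i k k'. i \<in> MS k \<Longrightarrow> i \<in> MS k' \<Longrightarrow> k \<le> k' + 1"
   and PS: "\<And>k i i'. i \<in> MS k \<Longrightarrow> i' \<in> MS k \<Longrightarrow> \<rho> i * \<rho> i' \<le> 2 * (1/2) ^ nat \<bar>i - i'\<bar>"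
   and PT: "\<And>k i i'. i \<in> MT k \<Longrightarrow> i' \<in> MT k \<Longrightarrow> \<rho> i * \<rho> i' \<le> 2 * (1/2) ^ nat \<bar>i - i'\<bar>"
   and cov: "\<And>i. \<exists>j. i \<in> MT j"
   and rel: "\<And>i. \<bar>a i * us i\<bar> \<le> L * \<rho> i * \<bar>a i * ut i\<bar>"
  shows "mixed_norm p q MS us a \<le> ennreal (32 * L) * mixed_norm p q MT ut a"
proof (rule norm_SUP_le)
  fix K G :: "int set" assume fK: "finite K" and fG: "finite G"
  define j where "j i = (SOME j. i \<in> MT j)" for i
  have jm: "i \<in> MT (j i)" for i unfolding j_def using cov[of i] by (rule someI_ex)
  have "mixed_trunc p q MS us a K G \<le> 32 * L * mixed_trunc p q MT ut a (j ` G) G"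
    by (rule transfer_trunc[where \<rho>=\<rho> and MS=MS and MT=MT and j=j, OF p1 q1 L fK fG r0 r1 two PS PT jm rel])
  hence "ennreal (mixed_trunc p q MS us a K G) \<le> ennreal (32 * L * mixed_trunc p q MT ut a (j ` G) G)"
    by (rule ennreal_leI)
  also have "\<dots> = ennreal (32 * L) * ennreal (mixed_trunc p q MT ut a (j ` G) G)"
    using L fG by (intro ennreal_mult) (auto intro!: mixed_nonneg)
  also have "\<dots> \<le> ennreal (32 * L) * mixed_norm p q MT ut a"
    using fG by (intro mult_left_mono trunc_le_norm) auto
  finally show "ennreal (mixed_trunc p q MS us a K G) \<le> ennreal (32 * L) * mixed_norm p q MT ut a" .
qed

lemma norm_mono:
  assumes "1 \<le> p" "1 \<le> q" "\<And>i. \<bar>f i * u i\<bar> \<le> \<bar>g i * u i\<bar>"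
  shows "mixed_norm p q M u f \<le> mixed_norm p q M u g"
proof (rule norm_SUP_le)
  fix K G :: "int set" assume fK: "finite K" and fG: "finite G"
  have "ennreal (mixed_trunc p q M u f K G) \<le> ennreal (mixed_trunc p q M u g K G)"
    using assms fK fG by (intro ennreal_leI mixed_mono) auto
  also have "\<dots> \<le> mixed_norm p q M u g" using fK fG by (rule trunc_le_norm)
  finally show "ennreal (mixed_trunc p q M u f K G) \<le> mixed_norm p q M u g" .
qed

lemma norm_quasi:
  assumes "1 \<le> p" "1 \<le> q"
  shows "mixed_norm p q M u (\<lambda>i. f i + g i) \<le> 16 * (mixed_norm p q M u f + mixed_norm p q M u g)"
proof (rule norm_SUP_le)
  fix K G :: "int set" assume fK: "finite K" and fG: "finite G"
  have "ennreal (mixed_trunc p q M u (\<lambda>i. f i + g i) K G) \<le> ennreal (16 * (mixed_trunc p q M u f K G + mixed_trunc p q M u g K G))"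
    using assms fK fG by (intro ennreal_leI mixed_quasi) auto
  also have "\<dots> = 16 * (ennreal (mixed_trunc p q M u f K G) + ennreal (mixed_trunc p q M u g K G))"
    using fK fG by (simp add: ennreal_mult ennreal_plus mixed_nonneg add_nonneg_nonneg)
  also have "\<dots> \<le> 16 * (mixed_norm p q M u f + mixed_norm p q M u g)"
    using fK fG by (intro mult_left_mono add_mono trunc_le_norm) auto
  finally show "ennreal (mixed_trunc p q M u (\<lambda>i. f i + g i) K G) \<le> 16 * (mixed_norm p q M u f + mixed_norm p q M u g)" .
qed

lemma si_pos: "strongly_increasing s \<Longrightarrow> 0 < s k"
  unfolding strongly_increasing_def by auto

lemma si_iter: assumes "strongly_increasing s" shows "2 ^ n * s k \<le> s (k + int n)"
proof (induction n)
  case 0 then show ?case by simp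
next
  case (Suc n)
  have "2 * s (k + int n) \<le> s (k + int n + 1)" using assms unfolding strongly_increasing_def by auto
  moreover have "k + int (Suc n) = k + int n + 1" by simp
  moreover have "2 ^ Suc n * s k = 2 * (2 ^ n * s k)" by simp
  ultimately show ?case using Suc by (smt (verit))
qed

lemma sd_iter: assumes "strongly_decreasing s" shows "s (k + int n) \<le> s k / 2 ^ n"
proof (induction n)
  case 0 then show ?case by simp
next
  case (Suc n)
  have "s (k + int n + 1) \<le> s (k + int n) / 2" using assms unfolding strongly_decreasing_def by auto
  have e: "s (k + int (Suc n)) = s (k + int n + 1)" by (simp add: ac_simps)
  have "s (k + int (Suc n)) \<le> s (k + int n) / 2" using e \<open>s (k + int n + 1) \<le> s (k + int n) / 2\<close> by simp
  also have "\<dots> \<le> (s k / 2 ^ n) / 2" using Suc by (intro divide_right_mono) auto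
  also have "\<dots> = s k / 2 ^ Suc n" by simp
  finally show ?case .
qed

lemma si_less: assumes "strongly_increasing s" "k < k'" shows "s k < s k'"
proof -
  define n where "n = nat (k' - k - 1)"
  have n: "k' = k + int (n + 1)" using assms(2) by (simp add: n_def)
  have "2 ^ (n+1) * s k \<le> s k'" using si_iter[OF assms(1), of "n+1" k] n by simp
  moreover have "s k < 2 ^ (n+1) * s k"
  proof -
    have h: "(1::real) < 2 ^ (n+1)" by (intro one_less_power) auto
    have "1 * s k < 2 ^ (n+1) * s k" by (rule mult_strict_right_mono[OF h si_pos[OF assms(1)]])
    then show ?thesis by simp
  qed
  ultimately show ?thesis by simp
qed

lemma si_two: assumes "strongly_increasing s" "s k \<le> y" "y \<le> s (k+1)" "s k' \<le> y" "y \<le> s (k'+1)"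
  shows "k \<le> k' + 1"
proof (rule ccontr)
  assume "\<not> k \<le> k' + 1"
  then have "s (k'+1) < s k" by (intro si_less[OF assms(1)]) auto
  then show False using assms by auto
qed

lemma si_cover: assumes "strongly_increasing s" "0 < y" shows "\<exists>k. s k \<le> y \<and> y \<le> s (k+1)"
proof -
  have s0: "0 < s 0" using si_pos[OF assms(1)] .
  obtain n where n: "(1/2::real) ^ n < y / s 0" using real_arch_pow_inv[of "y / s 0" "1/2"] assms s0 by auto
  have "2 ^ n * s (- int n) \<le> s 0" using si_iter[OF assms(1), of n "- int n"] by simp
  hence "s (- int n) \<le> s 0 / 2 ^ n" by (simp add: field_simps)
  also have "\<dots> < y" using n s0 by (simp add: field_simps)
  finally have lo: "s (- int n) \<le> y" by simp
  obtain m where m: "y / s 0 < 2 ^ m" using real_arch_pow[of 2 "y / s 0"] by auto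
  have hi: "y < s (int m)" using si_iter[OF assms(1), of m 0] m s0 by (simp add: field_simps)
  have "\<forall>a. s a \<le> y \<longrightarrow> y < s (a + int N) \<longrightarrow> (\<exists>k. s k \<le> y \<and> y \<le> s (k+1))" for N
  proof (induction N)
    case 0 then show ?case by auto
  next
    case (Suc N)
    show ?case
    proof (intro allI impI)
      fix a assume a: "s a \<le> y" "y < s (a + int (Suc N))"
      show "\<exists>k. s k \<le> y \<and> y \<le> s (k+1)"
      proof (cases "y < s (a + int N)")
        case True then show ?thesis using Suc a by blast
      next
        case False
        moreover have "s (a + int N + 1) = s (a + int (Suc N))" by (simp add: ac_simps)
        ultimately show ?thesis using a by (intro exI[of _ "a + int N"]) auto
      qed
    qed
  qed
  moreover have "y < s (- int n + int (m + n))" using hi by simp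
  ultimately show ?thesis using lo by blast
qed

lemma qc_pos: "nondeg_quasi_concave \<phi> \<Longrightarrow> 0 < s \<Longrightarrow> 0 < \<phi> s"
  unfolding nondeg_quasi_concave_def by auto

lemma qc_mono: "nondeg_quasi_concave \<phi> \<Longrightarrow> 0 < s \<Longrightarrow> s \<le> s' \<Longrightarrow> \<phi> s \<le> \<phi> s'"
  unfolding nondeg_quasi_concave_def by (auto intro: mono_onD)

lemma qc_anti: assumes "nondeg_quasi_concave \<phi>" "0 < s" "s \<le> s'" shows "\<phi> s' / s' \<le> \<phi> s / s"
proof -
  have "antimono_on {0<..} (\<lambda>t. \<phi> t / t)" using assms(1) unfolding nondeg_quasi_concave_def by auto
  then have "(\<lambda>x y. y \<le> x) (\<phi> s / s) (\<phi> s' / s')" by (rule monotone_onD) (use assms in auto)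
  then show ?thesis by simp
qed

lemma le_max_mult: "0 \<le> (y::real) \<Longrightarrow> y \<le> max 1 a * y"
  using mult_right_mono[OF max.cobounded1[of 1 a], of y] by simp

lemma qc1: assumes "nondeg_quasi_concave \<phi>" "0 < s" "0 < s'" shows "\<phi> s' \<le> max 1 (s'/s) * \<phi> s"
proof (cases "s' \<le> s")
  case True
  have "\<phi> s' \<le> \<phi> s" using qc_mono[OF assms(1,3) True] .
  also have "\<dots> \<le> max 1 (s'/s) * \<phi> s" using qc_pos[OF assms(1,2)] by (intro le_max_mult) auto
  finally show ?thesis .
next
  case False
  have "\<phi> s' / s' \<le> \<phi> s / s" using qc_anti[OF assms(1,2)] False by auto
  hence "\<phi> s' \<le> (s'/s) * \<phi> s" using assms by (simp add: field_simps)
  also have "\<dots> \<le> max 1 (s'/s) * \<phi> s" using qc_pos[OF assms(1,2)] by (intro mult_right_mono) auto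
  finally show ?thesis .
qed

lemma qc2: assumes "nondeg_quasi_concave \<phi>" "0 < s" "0 < s'" shows "\<phi> s' / s' \<le> max 1 (s/s') * (\<phi> s / s)"
proof (cases "s \<le> s'")
  case True
  have "\<phi> s' / s' \<le> \<phi> s / s" using qc_anti[OF assms(1,2) True] .
  also have "\<dots> \<le> max 1 (s/s') * (\<phi> s / s)" using qc_pos[OF assms(1,2)] assms by (intro le_max_mult) auto
  finally show ?thesis .
next
  case False
  have "\<phi> s' \<le> \<phi> s" using qc_mono[OF assms(1,3)] False by auto
  hence "\<phi> s' / s' \<le> (s/s') * (\<phi> s / s)" using assms by (simp add: field_simps)
  also have "\<dots> \<le> max 1 (s/s') * (\<phi> s / s)" using qc_pos[OF assms(1,2)] assms by (intro mult_right_mono) auto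
  finally show ?thesis .
qed

lemma alg1:
  fixes A B A' B' M :: real
  assumes "0 < A" "0 < B" "0 \<le> A'" "0 \<le> B'" "0 \<le> M"
    "2 ^ n * A * B \<le> A' * B'" "A' \<le> 2 * A" "B' \<le> M * B"
  shows "2 ^ n \<le> 2 * M"
proof -
  have "A' * B' \<le> (2 * A) * (M * B)" using assms by (intro mult_mono) auto
  hence "2 ^ n * (A * B) \<le> (2 * M) * (A * B)" using assms(6) by (simp add: algebra_simps)
  then show ?thesis using assms(1,2) by (simp add: mult_le_cancel_right)
qed

lemma alg2:
  fixes A B A' B' M :: real
  assumes "0 < A'" "0 < B'" "0 \<le> A" "0 \<le> B" "0 \<le> M"
    "A' * B' \<le> A * B / 2 ^ n" "A \<le> 2 * A'" "B \<le> M * B'"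
  shows "2 ^ n \<le> 2 * M"
proof -
  have "A * B \<le> (2 * A') * (M * B')" using assms by (intro mult_mono) auto
  moreover have "2 ^ n * (A' * B') \<le> A * B" using assms(6) by (simp add: field_simps)
  ultimately have "2 ^ n * (A' * B') \<le> (2 * M) * (A' * B')" by (simp add: algebra_simps)
  then show ?thesis using assms(1,2) by (simp add: mult_le_cancel_right)
qed

definition rho :: "real \<Rightarrow> real \<Rightarrow> real" where "rho t r = min (r / t) (t / r)"

lemma rho_nonneg: "0 < t \<Longrightarrow> 0 < r \<Longrightarrow> 0 \<le> rho t r"
  unfolding rho_def by auto

lemma rho_le1: assumes "0 < t" "0 < r" shows "rho t r \<le> 1"
proof (cases "r \<le> t")
  case True then have "r / t \<le> 1" using assms by simp
  then show ?thesis unfolding rho_def by simp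
next
  case False then have "t / r \<le> 1" using assms by simp
  then show ?thesis unfolding rho_def by simp
qed

lemma rho_prod: assumes "0 < t" "0 < r" "0 < r'"
  shows "rho t r * rho t r' \<le> r / r'" "rho t r * rho t r' \<le> r' / r"
proof -
  have "rho t r * rho t r' \<le> (r / t) * (t / r')" unfolding rho_def using assms
    by (intro mult_mono) auto
  then show "rho t r * rho t r' \<le> r / r'" using assms by simp
  have "rho t r * rho t r' \<le> (t / r) * (r' / t)" unfolding rho_def using assms
    by (intro mult_mono) auto
  then show "rho t r * rho t r' \<le> r' / r" using assms by simp
qed

lemma P_gen: assumes "0 < t" "0 < r" "0 < r'"
  and "2 ^ n \<le> 2 * max 1 (r'/r) \<or> 2 ^ n \<le> 2 * max 1 (r/r')"
  shows "rho t r * rho t r' \<le> 2 * (1/2) ^ n"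
proof -
  have le1: "rho t r * rho t r' \<le> 1" using rho_le1 rho_nonneg assms by (meson mult_le_one)
  have pw: "2 * (1/2::real) ^ n = 2 / 2 ^ n" by (simp add: power_one_over)
  consider "(2::real) ^ n \<le> 2" | "2 ^ n \<le> 2 * (r'/r)" | "2 ^ n \<le> 2 * (r/r')" using assms(4) by (auto simp: max_def split: if_splits)
  then show ?thesis
  proof cases
    case 1
    then have h: "1 \<le> 2 / (2::real) ^ n" by simp
    show ?thesis using le1 pw h by linarith
  next
    case 2
    then have "r / r' \<le> 2 / 2 ^ n" using assms by (simp add: field_simps)
    then show ?thesis using rho_prod(1)[OF assms(1-3)] pw by simp
  next
    case 3
    then have "r' / r \<le> 2 / 2 ^ n" using assms by (simp add: field_simps)
    then show ?thesis using rho_prod(2)[OF assms(1-3)] pw by simp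
  qed
qed

lemma psi_iters:
  assumes "discretizing_seq x \<psi>"
  shows "2 ^ n * \<psi> (x i) \<le> \<psi> (x (i + int n))"
    "\<psi> (x (i + int n)) / x (i + int n) \<le> (\<psi> (x i) / x i) / 2 ^ n"
proof -
  have "strongly_increasing (\<lambda>k. \<psi> (x k))" "strongly_decreasing (\<lambda>k. \<psi> (x k) / x k)"
    using assms unfolding discretizing_seq_def by auto
  from si_iter[OF this(1)] sd_iter[OF this(2)]
  show "2 ^ n * \<psi> (x i) \<le> \<psi> (x (i + int n))" "\<psi> (x (i + int n)) / x (i + int n) \<le> (\<psi> (x i) / x i) / 2 ^ n"
    by auto
qed

lemma disc_Z:
  assumes "discretizing_seq s \<psi>"
  shows "\<psi> (s (k+1)) \<le> 2 * \<psi> (s k) \<or> \<psi> (s k) / s k \<le> 2 * (\<psi> (s (k+1)) / s (k+1))"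
proof -
  obtain Z1 Z2 where "Z1 \<union> Z2 = UNIV" "\<forall>k\<in>Z1. \<psi> (s (k+1)) \<le> 2 * \<psi> (s k)"
    "\<forall>k\<in>Z2. \<psi> (s k) / s k \<le> 2 * (\<psi> (s (k+1)) / s (k+1))"
    using assms unfolding discretizing_seq_def by blast
  then show ?thesis by blast
qed

lemma disc_si: "discretizing_seq s \<psi> \<Longrightarrow> strongly_increasing s"
  unfolding discretizing_seq_def by auto

lemma P_tau_le:
  fixes \<phi>0 \<phi>1 \<phi> :: "real \<Rightarrow> real" and x \<tau> :: "int \<Rightarrow> real"
  assumes Q0: "nondeg_quasi_concave \<phi>0" and Q1: "nondeg_quasi_concave \<phi>1" and Q: "nondeg_quasi_concave \<phi>"
    and D: "discretizing_seq x (interp_fun \<phi> \<phi>0 \<phi>1)" and T: "discretizing_seq \<tau> \<phi>0" and t: "0 < t"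
    and b: "\<tau> k \<le> x i" "x i \<le> \<tau> (k+1)" "\<tau> k \<le> x i'" "x i' \<le> \<tau> (k+1)" and ii: "i \<le> i'"
  shows "rho t (\<phi>1 (x i) / \<phi>0 (x i)) * rho t (\<phi>1 (x i') / \<phi>0 (x i')) \<le> 2 * (1/2) ^ nat \<bar>i - i'\<bar>"
proof -
  define n where "n = nat (i' - i)"
  have i': "i' = i + int n" using ii by (simp add: n_def)
  have nabs: "nat \<bar>i - i'\<bar> = n" using ii by (simp add: n_def)
  have xp: "0 < x i" "0 < x i'" using si_pos[OF disc_si[OF D]] by auto
  have tp: "0 < \<tau> k" using si_pos[OF disc_si[OF T]] by auto
  define r where "r = \<phi>1 (x i) / \<phi>0 (x i)"
  define r' where "r' = \<phi>1 (x i') / \<phi>0 (x i')"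
  have p0: "0 < \<phi>0 (x i)" "0 < \<phi>0 (x i')" using qc_pos[OF Q0] xp by auto
  have p1: "0 < \<phi>1 (x i)" "0 < \<phi>1 (x i')" using qc_pos[OF Q1] xp by auto
  have rp: "0 < r" "0 < r'" using p0 p1 by (auto simp: r_def r'_def)
  have pr: "0 < \<phi> r" "0 < \<phi> r'" using qc_pos[OF Q] rp by auto
  have psi1: "2 ^ n * \<phi>0 (x i) * \<phi> r \<le> \<phi>0 (x i') * \<phi> r'"
    using psi_iters(1)[OF D, of n i] unfolding i'[symmetric] interp_fun_def r_def r'_def by (simp add: mult.assoc)
  have psi2: "(\<phi>0 (x i') / x i') * \<phi> r' \<le> (\<phi>0 (x i) / x i) * \<phi> r / 2 ^ n"
    using psi_iters(2)[OF D, of i n] unfolding i'[symmetric] interp_fun_def r_def r'_def by simp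
  have "2 ^ n \<le> 2 * max 1 (r'/r) \<or> 2 ^ n \<le> 2 * max 1 (r/r')"
  proof (cases "\<phi>0 (\<tau> (k+1)) \<le> 2 * \<phi>0 (\<tau> k)")
    case True
    have "\<phi>0 (x i') \<le> \<phi>0 (\<tau> (k+1))" using qc_mono[OF Q0] xp b by auto
    also have "\<dots> \<le> 2 * \<phi>0 (\<tau> k)" by (rule True)
    also have "\<phi>0 (\<tau> k) \<le> \<phi>0 (x i)" using qc_mono[OF Q0 tp] b by auto
    finally have A: "\<phi>0 (x i') \<le> 2 * \<phi>0 (x i)" by simp
    have "2 ^ n \<le> 2 * max 1 (r'/r)"
      by (rule alg1[OF p0(1) pr(1) _ _ _ psi1 A qc1[OF Q rp(1) rp(2)]]) (use p0 pr in auto)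
    then show ?thesis by simp
  next
    case False
    then have Z2: "\<phi>0 (\<tau> k) / \<tau> k \<le> 2 * (\<phi>0 (\<tau> (k+1)) / \<tau> (k+1))" using disc_Z[OF T, of k] by auto
    have "\<phi>0 (x i) / x i \<le> \<phi>0 (\<tau> k) / \<tau> k" using qc_anti[OF Q0 tp] b by auto
    also note Z2
    also have "\<phi>0 (\<tau> (k+1)) / \<tau> (k+1) \<le> \<phi>0 (x i') / x i'" using qc_anti[OF Q0] xp b by auto
    finally have A: "\<phi>0 (x i) / x i \<le> 2 * (\<phi>0 (x i') / x i')" by simp
    have "2 ^ n \<le> 2 * max 1 (r/r')"
      by (rule alg2[OF _ pr(2) _ _ _ psi2 A qc1[OF Q rp(2) rp(1)]]) (use p0 pr xp in auto)
    then show ?thesis by simp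
  qed
  then show ?thesis unfolding nabs r_def[symmetric] r'_def[symmetric] using t rp by (intro P_gen) auto
qed

lemma psi_alt: assumes "0 < ga y" "0 < gb y"
  shows "interp_fun g ga gb y = gb y * (g (gb y / ga y) / (gb y / ga y))"
  using assms unfolding interp_fun_def by (simp add: field_simps)

lemma P_z_le:
  fixes \<phi>0 \<phi>1 \<phi> :: "real \<Rightarrow> real" and x z :: "int \<Rightarrow> real"
  assumes Q0: "nondeg_quasi_concave \<phi>0" and Q1: "nondeg_quasi_concave \<phi>1" and Q: "nondeg_quasi_concave \<phi>"
    and D: "discretizing_seq x (interp_fun \<phi> \<phi>0 \<phi>1)" and T: "discretizing_seq z \<phi>1" and t: "0 < t"
    and b: "z k \<le> x i" "x i \<le> z (k+1)" "z k \<le> x i'" "x i' \<le> z (k+1)" and ii: "i \<le> i'"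
  shows "rho t (\<phi>1 (x i) / \<phi>0 (x i)) * rho t (\<phi>1 (x i') / \<phi>0 (x i')) \<le> 2 * (1/2) ^ nat \<bar>i - i'\<bar>"
proof -
  define n where "n = nat (i' - i)"
  have i': "i' = i + int n" using ii by (simp add: n_def)
  have nabs: "nat \<bar>i - i'\<bar> = n" using ii by (simp add: n_def)
  have xp: "0 < x i" "0 < x i'" using si_pos[OF disc_si[OF D]] by auto
  have tp: "0 < z k" using si_pos[OF disc_si[OF T]] by auto
  define r where "r = \<phi>1 (x i) / \<phi>0 (x i)"
  define r' where "r' = \<phi>1 (x i') / \<phi>0 (x i')"
  have p0: "0 < \<phi>0 (x i)" "0 < \<phi>0 (x i')" using qc_pos[OF Q0] xp by auto
  have p1: "0 < \<phi>1 (x i)" "0 < \<phi>1 (x i')" using qc_pos[OF Q1] xp by auto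
  have rp: "0 < r" "0 < r'" using p0 p1 by (auto simp: r_def r'_def)
  have pr: "0 < \<phi> r / r" "0 < \<phi> r' / r'" using qc_pos[OF Q] rp by auto
  have e1: "interp_fun \<phi> \<phi>0 \<phi>1 (x i) = \<phi>1 (x i) * (\<phi> r / r)" unfolding r_def by (rule psi_alt[where g=\<phi> and ga=\<phi>0 and gb=\<phi>1 and y="x i", OF p0(1) p1(1)])
  have e2: "interp_fun \<phi> \<phi>0 \<phi>1 (x i') = \<phi>1 (x i') * (\<phi> r' / r')" unfolding r'_def by (rule psi_alt[where g=\<phi> and ga=\<phi>0 and gb=\<phi>1 and y="x i'", OF p0(2) p1(2)])
  have psi1: "2 ^ n * \<phi>1 (x i) * (\<phi> r / r) \<le> \<phi>1 (x i') * (\<phi> r' / r')"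
    using psi_iters(1)[OF D, of n i] unfolding i'[symmetric] e1 e2 by (simp add: mult.assoc)
  have psi2: "(\<phi>1 (x i') / x i') * (\<phi> r' / r') \<le> (\<phi>1 (x i) / x i) * (\<phi> r / r) / 2 ^ n"
    using psi_iters(2)[OF D, of i n] unfolding i'[symmetric] e1 e2 by (simp add: ac_simps)
  have "2 ^ n \<le> 2 * max 1 (r'/r) \<or> 2 ^ n \<le> 2 * max 1 (r/r')"
  proof (cases "\<phi>1 (z (k+1)) \<le> 2 * \<phi>1 (z k)")
    case True
    have "\<phi>1 (x i') \<le> \<phi>1 (z (k+1))" using qc_mono[OF Q1] xp b by auto
    also have "\<dots> \<le> 2 * \<phi>1 (z k)" by (rule True)
    also have "\<phi>1 (z k) \<le> \<phi>1 (x i)" using qc_mono[OF Q1 tp] b by auto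
    finally have A: "\<phi>1 (x i') \<le> 2 * \<phi>1 (x i)" by simp
    have "2 ^ n \<le> 2 * max 1 (r/r')"
      by (rule alg1[OF p1(1) pr(1) _ _ _ psi1 A qc2[OF Q rp(1) rp(2)]]) (use p1 pr in auto)
    then show ?thesis by simp
  next
    case False
    then have Z2: "\<phi>1 (z k) / z k \<le> 2 * (\<phi>1 (z (k+1)) / z (k+1))" using disc_Z[OF T, of k] by auto
    have "\<phi>1 (x i) / x i \<le> \<phi>1 (z k) / z k" using qc_anti[OF Q1 tp] b by auto
    also note Z2
    also have "\<phi>1 (z (k+1)) / z (k+1) \<le> \<phi>1 (x i') / x i'" using qc_anti[OF Q1] xp b by auto
    finally have A: "\<phi>1 (x i) / x i \<le> 2 * (\<phi>1 (x i') / x i')" by simp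
    have "2 ^ n \<le> 2 * max 1 (r'/r)"
      by (rule alg2[OF _ pr(2) _ _ _ psi2 A qc2[OF Q rp(2) rp(1)]]) (use p1 pr xp in auto)
    then show ?thesis by simp
  qed
  then show ?thesis unfolding nabs r_def[symmetric] r'_def[symmetric] using t rp by (intro P_gen) auto
qed

lemma blk_two: assumes "strongly_increasing s"
  "i \<in> {i. s k \<le> x i \<and> x i \<le> s (k+1)}" "i \<in> {i. s k' \<le> x i \<and> x i \<le> s (k'+1)}"
  shows "k \<le> k' + 1"
  using assms si_two[OF assms(1), of k "x i" k'] by auto

lemma blk_cover: assumes "strongly_increasing s" "0 < x i"
  shows "\<exists>k. i \<in> {i. s k \<le> x i \<and> x i \<le> s (k+1)}"
  using si_cover[OF assms] by auto

lemma P_tau: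
  assumes Q0: "nondeg_quasi_concave \<phi>0" and Q1: "nondeg_quasi_concave \<phi>1" and Q: "nondeg_quasi_concave \<phi>"
    and D: "discretizing_seq x (interp_fun \<phi> \<phi>0 \<phi>1)" and T: "discretizing_seq \<tau> \<phi>0" and t: "0 < t"
    and "i \<in> {i. \<tau> k \<le> x i \<and> x i \<le> \<tau> (k+1)}" "i' \<in> {i. \<tau> k \<le> x i \<and> x i \<le> \<tau> (k+1)}"
  shows "rho t (\<phi>1 (x i) / \<phi>0 (x i)) * rho t (\<phi>1 (x i') / \<phi>0 (x i')) \<le> 2 * (1/2) ^ nat \<bar>i - i'\<bar>"
proof (cases "i \<le> i'")
  case True then show ?thesis using P_tau_le[OF Q0 Q1 Q D T t] assms(7,8) by auto
next
  case False
  then have "rho t (\<phi>1 (x i') / \<phi>0 (x i')) * rho t (\<phi>1 (x i) / \<phi>0 (x i)) \<le> 2 * (1/2) ^ nat \<bar>i' - i\<bar>"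
    using P_tau_le[OF Q0 Q1 Q D T t, of k i' i] assms(7,8) by auto
  then show ?thesis by (simp add: mult.commute abs_minus_commute)
qed

lemma P_z:
  assumes Q0: "nondeg_quasi_concave \<phi>0" and Q1: "nondeg_quasi_concave \<phi>1" and Q: "nondeg_quasi_concave \<phi>"
    and D: "discretizing_seq x (interp_fun \<phi> \<phi>0 \<phi>1)" and T: "discretizing_seq z \<phi>1" and t: "0 < t"
    and "i \<in> {i. z k \<le> x i \<and> x i \<le> z (k+1)}" "i' \<in> {i. z k \<le> x i \<and> x i \<le> z (k+1)}"
  shows "rho t (\<phi>1 (x i) / \<phi>0 (x i)) * rho t (\<phi>1 (x i') / \<phi>0 (x i')) \<le> 2 * (1/2) ^ nat \<bar>i - i'\<bar>"
proof (cases "i \<le> i'")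
  case True then show ?thesis using P_z_le[OF Q0 Q1 Q D T t] assms(7,8) by auto
next
  case False
  then have "rho t (\<phi>1 (x i') / \<phi>0 (x i')) * rho t (\<phi>1 (x i) / \<phi>0 (x i)) \<le> 2 * (1/2) ^ nat \<bar>i' - i\<bar>"
    using P_z_le[OF Q0 Q1 Q D T t, of k i' i] assms(7,8) by auto
  then show ?thesis by (simp add: mult.commute abs_minus_commute)
qed

lemma rho_small: assumes "0 < r" "r \<le> t" shows "rho t r = r / t"
proof -
  have "r / t \<le> 1" "1 \<le> t / r" using assms by auto
  then show ?thesis unfolding rho_def by (simp add: min_def)
qed

lemma rho_big: assumes "0 < t" "t < r" shows "rho t r = t / r"
proof -
  have "t / r \<le> 1" "1 \<le> r / t" using assms by auto
  then have "\<not> r / t \<le> t / r \<or> r / t = t / r" by linarith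
  then show ?thesis unfolding rho_def by (auto simp: min_def)
qed

lemma relI: assumes "0 < t" "0 < a0" "0 < a1" "a1 / a0 \<le> t"
  shows "\<bar>c * (1 / a0)\<bar> \<le> t * rho t (a1 / a0) * \<bar>c * (1 / a1)\<bar>"
proof -
  have e: "rho t (a1 / a0) = (a1 / a0) / t" using assms by (intro rho_small) auto
  have "t * ((a1 / a0) / t) * \<bar>c * (1 / a1)\<bar> = \<bar>c * (1 / a0)\<bar>" using assms by (simp add: abs_mult)
  then show ?thesis unfolding e by simp
qed

lemma relII: assumes "0 < t" "0 < a0" "0 < a1" "t < a1 / a0"
  shows "\<bar>c * (1 / a1)\<bar> \<le> (1 / t) * rho t (a1 / a0) * \<bar>c * (1 / a0)\<bar>"
proof -
  have e: "rho t (a1 / a0) = t / (a1 / a0)" using assms by (intro rho_big) auto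
  have "(1 / t) * (t / (a1 / a0)) * \<bar>c * (1 / a0)\<bar> = \<bar>c * (1 / a1)\<bar>" using assms by (simp add: abs_mult)
  then show ?thesis unfolding e by simp
qed

lemma ennreal_528: "ennreal (1/528) * 528 = 1"
  by (simp flip: ennreal_mult ennreal_numeral)

lemma ennreal_arith528: fixes X Y T :: ennreal shows "16 * (X + 32 * T * Y) + 16 * (32 * X + T * Y) = 528 * (X + T * Y)"
proof -
  have "16 * (X + 32 * T * Y) + 16 * (32 * X + T * Y) = (16 * X + (16 * 32) * X) + ((16 * 32) * (T * Y) + 16 * (T * Y))"
    by (simp only: distrib_left mult.assoc add.assoc add.left_commute mult.left_commute)
  also have "\<dots> = (16 + 16 * 32) * X + (16 * 32 + 16) * (T * Y)"
    by (simp only: distrib_right)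
  also have "(16 + 16 * 32 :: ennreal) = 528" by simp
  also have "(16 * 32 + 16 :: ennreal) = 528" by simp
  finally show ?thesis by (simp only: distrib_left)
qed

theorem lemma3p9:
  fixes p q :: ereal
    and \<phi>0 \<phi>1 \<phi> :: "real \<Rightarrow> real"
    and tt \<tau> z :: "int \<Rightarrow> real"
  assumes "1 \<le> p" and "1 \<le> q"
    and "nondeg_quasi_concave \<phi>0" and "nondeg_quasi_concave \<phi>1" and "nondeg_quasi_concave \<phi>"
    and "discretizing_seq tt (interp_fun \<phi> \<phi>0 \<phi>1)"
    and "discretizing_seq \<tau> \<phi>0"
    and "discretizing_seq z \<phi>1"
  defines "N0 \<equiv> mixed_norm p q (\<lambda>k. {i. \<tau> k \<le> tt i \<and> tt i \<le> \<tau> (k+1)}) (\<lambda>i. 1 / \<phi>0 (tt i))"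
    and "N1 \<equiv> mixed_norm p q (\<lambda>k. {i. z k \<le> tt i \<and> tt i \<le> z (k+1)}) (\<lambda>i. 1 / \<phi>1 (tt i))"
  shows "\<exists>C>0. \<forall>a t. in_sum_space N0 N1 a \<and> t > 0 \<longrightarrow>
           (let R = N0 (\<lambda>i. if \<phi>1 (tt i) / \<phi>0 (tt i) \<le> t then a i else 0)
                    + ennreal t * N1 (\<lambda>i. if \<phi>1 (tt i) / \<phi>0 (tt i) > t then a i else 0)
            in K_functional N0 N1 t a \<le> ennreal C * R \<and> R \<le> ennreal C * K_functional N0 N1 t a)"
proof (intro exI[of _ 528] conjI allI impI)
  note p1 = assms(1) and q1 = assms(2) and Q0 = assms(3) and Q1 = assms(4) and Q = assms(5)
    and D = assms(6) and T0 = assms(7) and T1 = assms(8)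
  fix a :: "int \<Rightarrow> real" and t :: real
  assume "in_sum_space N0 N1 a \<and> 0 < t"
  then have t: "0 < t" by auto
  define M0 where "M0 = (\<lambda>k. {i. \<tau> k \<le> tt i \<and> tt i \<le> \<tau> (k+1)})"
  define M1 where "M1 = (\<lambda>k. {i. z k \<le> tt i \<and> tt i \<le> z (k+1)})"
  define u where "u = (\<lambda>i. 1 / \<phi>0 (tt i))"
  define v where "v = (\<lambda>i. 1 / \<phi>1 (tt i))"
  have N0: "N0 = mixed_norm p q M0 u" unfolding N0_def M0_def u_def ..
  have N1: "N1 = mixed_norm p q M1 v" unfolding N1_def M1_def v_def ..
  define \<rho> where "\<rho> = (\<lambda>i. rho t (\<phi>1 (tt i) / \<phi>0 (tt i)))"
  have xp: "0 < tt i" for i using si_pos[OF disc_si[OF D]] .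
  have p0: "0 < \<phi>0 (tt i)" for i using qc_pos[OF Q0 xp] .
  have pp1: "0 < \<phi>1 (tt i)" for i using qc_pos[OF Q1 xp] .
  have r0: "0 \<le> \<rho> i" for i unfolding \<rho>_def using t p0 pp1 by (intro rho_nonneg) auto
  have r1: "\<rho> i \<le> 1" for i unfolding \<rho>_def using t p0 pp1 by (intro rho_le1) auto
  have two0: "k \<le> k' + 1" if "i \<in> M0 k" "i \<in> M0 k'" for i k k'
    using blk_two[OF disc_si[OF T0], where x=tt and i=i and k=k and k'=k'] that unfolding M0_def by simp
  have two1: "k \<le> k' + 1" if "i \<in> M1 k" "i \<in> M1 k'" for i k k'
    using blk_two[OF disc_si[OF T1], where x=tt and i=i and k=k and k'=k'] that unfolding M1_def by simp
  have cov0: "\<exists>k. i \<in> M0 k" for i unfolding M0_def by (rule blk_cover[where x=tt, OF disc_si[OF T0] xp])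
  have cov1: "\<exists>k. i \<in> M1 k" for i unfolding M1_def by (rule blk_cover[where x=tt, OF disc_si[OF T1] xp])
  have P0: "\<rho> i * \<rho> i' \<le> 2 * (1/2) ^ nat \<bar>i - i'\<bar>" if "i \<in> M0 k" "i' \<in> M0 k" for k i i'
    unfolding \<rho>_def by (rule P_tau[OF Q0 Q1 Q D T0 t]) (use that in \<open>auto simp: M0_def\<close>)
  have P1: "\<rho> i * \<rho> i' \<le> 2 * (1/2) ^ nat \<bar>i - i'\<bar>" if "i \<in> M1 k" "i' \<in> M1 k" for k i i'
    unfolding \<rho>_def by (rule P_z[OF Q0 Q1 Q D T1 t]) (use that in \<open>auto simp: M1_def\<close>)
  define Om where "Om = (\<lambda>f::int \<Rightarrow> real. \<lambda>i. if \<phi>1 (tt i) / \<phi>0 (tt i) \<le> t then f i else 0)"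
  define Oc where "Oc = (\<lambda>f::int \<Rightarrow> real. \<lambda>i. if \<phi>1 (tt i) / \<phi>0 (tt i) > t then f i else 0)"
  have TI: "N0 (Om f) \<le> ennreal (32 * t) * N1 (Om f)" for f
    unfolding N0 N1
  proof (rule norm_transfer[OF p1 q1 _ r0 r1 two0 P0 P1 cov1])
    fix i show "\<bar>Om f i * u i\<bar> \<le> t * \<rho> i * \<bar>Om f i * v i\<bar>"
      unfolding Om_def u_def v_def \<rho>_def using relI[OF t p0 pp1] by auto
  qed (use t in auto)
  have TII: "N1 (Oc f) \<le> ennreal (32 * (1/t)) * N0 (Oc f)" for f
    unfolding N0 N1
  proof (rule norm_transfer[OF p1 q1 _ r0 r1 two1 P1 P0 cov0])
    fix i show "\<bar>Oc f i * v i\<bar> \<le> (1/t) * \<rho> i * \<bar>Oc f i * u i\<bar>"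
      unfolding Oc_def u_def v_def \<rho>_def using relII[OF t p0 pp1] by auto
  qed (use t in auto)
  have monoO0: "N0 (Om f) \<le> N0 f" "N0 (Oc f) \<le> N0 f" for f
    unfolding N0 using p1 q1 by (auto intro!: norm_mono simp: Om_def Oc_def abs_mult)
  have monoO1: "N1 (Om f) \<le> N1 f" "N1 (Oc f) \<le> N1 f" for f
    unfolding N1 using p1 q1 by (auto intro!: norm_mono simp: Om_def Oc_def abs_mult)
  have quasi0: "N0 (\<lambda>i. f i + g i) \<le> 16 * (N0 f + N0 g)" for f g unfolding N0 by (rule norm_quasi[OF p1 q1])
  have quasi1: "N1 (\<lambda>i. f i + g i) \<le> 16 * (N1 f + N1 g)" for f g unfolding N1 by (rule norm_quasi[OF p1 q1])
  define R where "R = N0 (Om a) + ennreal t * N1 (Oc a)"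
  define S where "S = {(b, c). a = (\<lambda>i. b i + c i) \<and> in_space N0 b \<and> in_space N1 c}"
  have Kdef: "K_functional N0 N1 t a = (INF bc \<in> S. N0 (fst bc) + ennreal t * N1 (snd bc))"
    unfolding K_functional_def S_def ..
  have lower: "R \<le> 528 * (N0 b + ennreal t * N1 c)" if "a = (\<lambda>i. b i + c i)" for b c
  proof -
    have sOm: "Om a = (\<lambda>i. Om b i + Om c i)" "Oc a = (\<lambda>i. Oc b i + Oc c i)"
      unfolding Om_def Oc_def that by auto
    have h1: "N0 (Om a) \<le> 16 * (N0 b + 32 * ennreal t * N1 c)"
    proof -
      have "N0 (Om a) \<le> 16 * (N0 (Om b) + N0 (Om c))" unfolding sOm by (rule quasi0)
      also have "N0 (Om c) \<le> ennreal (32 * t) * N1 (Om c)" by (rule TI)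
      also have "\<dots> \<le> ennreal (32 * t) * N1 c" by (intro mult_left_mono monoO1) auto
      also have "N0 (Om b) \<le> N0 b" by (rule monoO0)
      finally show ?thesis using t by (simp add: ennreal_mult mult.assoc add_mono mult_left_mono)
    qed
    have h2: "ennreal t * N1 (Oc a) \<le> 16 * (32 * N0 b + ennreal t * N1 c)"
    proof -
      have "ennreal t * N1 (Oc a) \<le> ennreal t * (16 * (N1 (Oc b) + N1 (Oc c)))"
        unfolding sOm by (intro mult_left_mono quasi1) auto
      also have "\<dots> = 16 * (ennreal t * N1 (Oc b) + ennreal t * N1 (Oc c))" by (simp add: algebra_simps)
      also have "ennreal t * N1 (Oc b) \<le> ennreal t * (ennreal (32 * (1/t)) * N0 (Oc b))"
        by (intro mult_left_mono TII) auto
      also have "\<dots> = 32 * N0 (Oc b)"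
        using t by (simp add: mult.assoc[symmetric] flip: ennreal_mult ennreal_numeral)
      also have "\<dots> \<le> 32 * N0 b" by (intro mult_left_mono monoO0) auto
      also have "ennreal t * N1 (Oc c) \<le> ennreal t * N1 c" by (intro mult_left_mono monoO1) auto
      finally show ?thesis by (simp add: add_mono mult_left_mono)
    qed
    have "R \<le> 16 * (N0 b + 32 * ennreal t * N1 c) + 16 * (32 * N0 b + ennreal t * N1 c)"
      unfolding R_def using h1 h2 by (rule add_mono)
    also have "\<dots> = 528 * (N0 b + ennreal t * N1 c)" by (rule ennreal_arith528)
    finally show ?thesis .
  qed
  have low: "R \<le> 528 * K_functional N0 N1 t a"
  proof -
    have "ennreal (1/528) * R \<le> K_functional N0 N1 t a"
      unfolding Kdef
    proof (rule INF_greatest)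
      fix bc assume "bc \<in> S"
      then have "a = (\<lambda>i. fst bc i + snd bc i)" unfolding S_def by auto
      then have "R \<le> 528 * (N0 (fst bc) + ennreal t * N1 (snd bc))" by (rule lower)
      then have "ennreal (1/528) * R \<le> ennreal (1/528) * (528 * (N0 (fst bc) + ennreal t * N1 (snd bc)))"
        by (rule mult_left_mono) auto
      also have "\<dots> = N0 (fst bc) + ennreal t * N1 (snd bc)"
        by (simp only: mult.assoc[symmetric] ennreal_528 mult_1)
      finally show "ennreal (1/528) * R \<le> N0 (fst bc) + ennreal t * N1 (snd bc)" .
    qed
    then have "528 * (ennreal (1/528) * R) \<le> 528 * K_functional N0 N1 t a" by (rule mult_left_mono) auto
    moreover have "528 * (ennreal (1/528) * R) = R"
      by (simp only: mult.assoc[symmetric] mult.commute[of 528] ennreal_528 mult_1)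
    ultimately show ?thesis by simp
  qed
  have up: "K_functional N0 N1 t a \<le> 528 * R"
  proof (cases "R = top")
    case True then show ?thesis by simp
  next
    case False
    have f0: "N0 (Om a) < top" using False unfolding R_def by (auto simp: top_unique less_top)
    have "ennreal t * N1 (Oc a) \<noteq> top" using False unfolding R_def by auto
    hence f1: "N1 (Oc a) < top" using t by (auto simp: less_top ennreal_mult_eq_top_iff)
    have "(Om a, Oc a) \<in> S" unfolding S_def in_space_def using f0 f1
      by (auto simp: Om_def Oc_def fun_eq_iff)
    then have "K_functional N0 N1 t a \<le> R" unfolding Kdef R_def by (rule INF_lower2) simp
    also have "R \<le> 528 * R" using mult_right_mono[of 1 528 R] by simp
    finally show ?thesis .
  qed
  show "let R = N0 (\<lambda>i. if \<phi>1 (tt i) / \<phi>0 (tt i) \<le> t then a i else 0)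
                    + ennreal t * N1 (\<lambda>i. if \<phi>1 (tt i) / \<phi>0 (tt i) > t then a i else 0)
            in K_functional N0 N1 t a \<le> ennreal 528 * R \<and> R \<le> ennreal 528 * K_functional N0 N1 t a"
    using up low unfolding Let_def R_def Om_def Oc_def by simp
qed simp

end
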